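(* Let $(M_i)_{i\in I}$ be a family of strongly sofic monoids. Then the product monoid $\prod_{i\in I}M_i$ is strongly sofic.
   Context: Hamming metric on $\operatorname{Map}(D)$ (monoid of maps $D\to D$, $D$ finite non-empty): $d_D^{\mathrm{Ham}}(f,g)=\frac{1}{|D|}|\{v:f(v)\ne g(v)\}|$. A monoid $M$ is strongly sofic if for every finite $K\subset M$ there is an integer $\Delta_K\ge1$ such that for every $\varepsilon>0$ there exist a non-empty finite set $D$ and a map $\sigma\colon M\to\operatorname{Map}(D)$ with (1) $\sigma(1_M)=\mathrm{Id}_D$; (2) $d_D^{\mathrm{Ham}}(\sigma(k_1k_2),\sigma(k_1)\sigma(k_2))\le\varepsilon$ for $k_1,k_2\in K$; (3) $d_D^{\mathrm{Ham}}(\sigma(k_1),\sigma(k_2))\ge1-\varepsilon$ for distinct $k_1,k_2\in K$; (4) $|\sigma(k)^{-1}(v)|\le\Delta_K$ for $k\in K$, $v\in D$. The product monoid has componentwise multiplication. *)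

theory Defs
  imports Complex_Main "HOL-Algebra.Product_Groups"
begin

text \<open>Normalized Hamming distance between maps on the finite set D
  (maps D to D are represented by functions nat to nat; only values on D matter).\<close>
definition ham_dist :: "nat set \<Rightarrow> (nat \<Rightarrow> nat) \<Rightarrow> (nat \<Rightarrow> nat) \<Rightarrow> real" where
  "ham_dist D f g = real (card {v \<in> D. f v \<noteq> g v}) / real (card D)"

definition strongly_sofic :: "('a, 'b) monoid_scheme \<Rightarrow> bool" where
  "strongly_sofic M \<longleftrightarrow>
     (\<forall>K. K \<subseteq> carrier M \<and> finite K \<longrightarrow>
       (\<exists>\<Delta>::nat. \<Delta> \<ge> 1 \<and>
         (\<forall>\<epsilon>::real. \<epsilon> > 0 \<longrightarrow>
           (\<exists>(D::nat set) (\<sigma>::'a \<Rightarrow> nat \<Rightarrow> nat).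
              finite D \<and> D \<noteq> {} \<and>
              (\<forall>m \<in> carrier M. \<sigma> m ` D \<subseteq> D) \<and>
              (\<forall>v \<in> D. \<sigma> \<one>\<^bsub>M\<^esub> v = v) \<and>
              (\<forall>k1 \<in> K. \<forall>k2 \<in> K.
                  ham_dist D (\<sigma> (k1 \<otimes>\<^bsub>M\<^esub> k2)) (\<sigma> k1 \<circ> \<sigma> k2) \<le> \<epsilon>) \<and>
              (\<forall>k1 \<in> K. \<forall>k2 \<in> K. k1 \<noteq> k2 \<longrightarrow>
                  ham_dist D (\<sigma> k1) (\<sigma> k2) \<ge> 1 - \<epsilon>) \<and>
              (\<forall>k \<in> K. \<forall>v \<in> D. card {u \<in> D. \<sigma> k u = v} \<le> \<Delta>)))))"

end

theory Submission
  imports Defs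
begin

definition pmap :: "'i set \<Rightarrow> ('i \<Rightarrow> nat \<Rightarrow> nat) \<Rightarrow> ('i \<Rightarrow> nat) \<Rightarrow> ('i \<Rightarrow> nat)" where
  "pmap J f p = (\<lambda>j\<in>J. f j (p j))"

lemma card_coord:
  assumes "finite J" "j \<in> J"
  shows "card {p \<in> PiE J D. p j \<in> A} * card (D j) = card (A \<inter> D j) * card (PiE J D)"
proof -
  have eq: "{p \<in> PiE J D. p j \<in> A} = PiE J (D(j := A \<inter> D j))"
    using assms(2) by (auto simp: PiE_iff extensional_def split: if_splits)
  have "card (PiE J (D(j := A \<inter> D j))) = card (A \<inter> D j) * (\<Prod>i\<in>J-{j}. card (D i))"
    using assms by (simp add: card_PiE prod.remove[OF assms(1,2)])
  moreover have "card (PiE J D) = card (D j) * (\<Prod>i\<in>J-{j}. card (D i))"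
    using assms by (simp add: card_PiE prod.remove[OF assms(1,2)])
  ultimately show ?thesis using eq by simp
qed

lemma ham_coord:
  assumes "finite J" "j \<in> J" "finite (D j)" "D j \<noteq> {}"
  shows "real (card {p \<in> PiE J D. f (p j) \<noteq> g (p j)}) = ham_dist (D j) f g * card (PiE J D)"
proof -
  have c: "card {p \<in> PiE J D. p j \<in> {v. f v \<noteq> g v}} * card (D j) = card ({v. f v \<noteq> g v} \<inter> D j) * card (PiE J D)"
    by (rule card_coord[OF assms(1,2)])
  have e: "{v. f v \<noteq> g v} \<inter> D j = {v \<in> D j. f v \<noteq> g v}" by auto
  have pos: "real (card (D j)) > 0" using assms(3,4) by (simp add: card_gt_0_iff)
  have e2: "{p \<in> PiE J D. p j \<in> {v. f v \<noteq> g v}} = {p \<in> PiE J D. f (p j) \<noteq> g (p j)}" by auto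
  from c have "card {p \<in> PiE J D. f (p j) \<noteq> g (p j)} * card (D j) = card {v \<in> D j. f v \<noteq> g v} * card (PiE J D)"
    unfolding e e2 .
  then have h: "real (card {p \<in> PiE J D. f (p j) \<noteq> g (p j)}) * real (card (D j)) = real (card {v \<in> D j. f v \<noteq> g v}) * real (card (PiE J D))"
    unfolding of_nat_mult[symmetric] by (rule arg_cong)
  have "real (card {p \<in> PiE J D. f (p j) \<noteq> g (p j)}) = real (card {v \<in> D j. f v \<noteq> g v}) * real (card (PiE J D)) / real (card (D j))"
    using h pos by (simp add: eq_divide_eq)
  then show ?thesis unfolding ham_dist_def by simp
qed

lemma ham_prod_upper:
  assumes "finite J" "\<And>i. i \<in> J \<Longrightarrow> finite (D i)"
  shows "card {p \<in> PiE J D. pmap J f p \<noteq> pmap J g p} \<le> (\<Sum>j\<in>J. card {p \<in> PiE J D. f j (p j) \<noteq> g j (p j)})"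
proof -
  have sub: "{p \<in> PiE J D. pmap J f p \<noteq> pmap J g p} \<subseteq> (\<Union>j\<in>J. {p \<in> PiE J D. f j (p j) \<noteq> g j (p j)})"
  proof
    fix p assume "p \<in> {p \<in> PiE J D. pmap J f p \<noteq> pmap J g p}"
    then have "p \<in> PiE J D" "pmap J f p \<noteq> pmap J g p" by auto
    have "\<exists>j\<in>J. f j (p j) \<noteq> g j (p j)"
    proof (rule ccontr)
      assume "\<not> (\<exists>j\<in>J. f j (p j) \<noteq> g j (p j))"
      then have "pmap J f p = pmap J g p" unfolding pmap_def by (intro restrict_ext) auto
      with \<open>pmap J f p \<noteq> pmap J g p\<close> show False by simp
    qed
    then obtain j where "j \<in> J" "f j (p j) \<noteq> g j (p j)" by blast
    then show "p \<in> (\<Union>j\<in>J. {p \<in> PiE J D. f j (p j) \<noteq> g j (p j)})" using \<open>p \<in> PiE J D\<close> by auto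
  qed
  have finP: "finite (PiE J D)" using assms by (simp add: finite_PiE)
  have "card {p \<in> PiE J D. pmap J f p \<noteq> pmap J g p} \<le> card (\<Union>j\<in>J. {p \<in> PiE J D. f j (p j) \<noteq> g j (p j)})"
  proof (rule card_mono[OF _ sub])
    have "\<And>j. finite {p \<in> PiE J D. f j (p j) \<noteq> g j (p j)}" using \<open>finite (PiE J D)\<close> by simp
    then show "finite (\<Union>j\<in>J. {p \<in> PiE J D. f j (p j) \<noteq> g j (p j)})" using assms(1) by blast
  qed
  also have "\<dots> \<le> (\<Sum>j\<in>J. card {p \<in> PiE J D. f j (p j) \<noteq> g j (p j)})"
    by (rule card_UN_le[OF assms(1)])
  finally show ?thesis .
qed

lemma ham_pmap_le:
  assumes "finite J" "\<And>i. i \<in> J \<Longrightarrow> finite (D i) \<and> D i \<noteq> {}"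
  shows "real (card {p \<in> PiE J D. pmap J f p \<noteq> pmap J g p}) / real (card (PiE J D))
     \<le> (\<Sum>j\<in>J. ham_dist (D j) (f j) (g j))"
proof -
  have fin: "\<And>i. i \<in> J \<Longrightarrow> finite (D i)" using assms by auto
  have pos: "real (card (PiE J D)) > 0"
    using assms by (simp add: card_gt_0_iff finite_PiE PiE_eq_empty_iff)
  have "real (card {p \<in> PiE J D. pmap J f p \<noteq> pmap J g p}) \<le> real (\<Sum>j\<in>J. card {p \<in> PiE J D. f j (p j) \<noteq> g j (p j)})"
    using ham_prod_upper[OF assms(1) fin] by (simp only: of_nat_le_iff)
  also have "\<dots> = (\<Sum>j\<in>J. real (card {p \<in> PiE J D. f j (p j) \<noteq> g j (p j)}))" by simp
  also have "\<dots> = (\<Sum>j\<in>J. ham_dist (D j) (f j) (g j) * real (card (PiE J D)))"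
  proof (rule sum.cong[OF refl])
    fix j assume "j \<in> J"
    then show "real (card {p \<in> PiE J D. f j (p j) \<noteq> g j (p j)}) = ham_dist (D j) (f j) (g j) * real (card (PiE J D))"
      using assms by (intro ham_coord) auto
  qed
  also have "\<dots> = (\<Sum>j\<in>J. ham_dist (D j) (f j) (g j)) * real (card (PiE J D))"
    by (simp add: sum_distrib_right)
  finally show ?thesis using pos by (simp add: divide_le_eq)
qed

lemma ham_pmap_ge:
  assumes "finite J" "\<And>i. i \<in> J \<Longrightarrow> finite (D i) \<and> D i \<noteq> {}" "j \<in> J"
  shows "ham_dist (D j) (f j) (g j) \<le> real (card {p \<in> PiE J D. pmap J f p \<noteq> pmap J g p}) / real (card (PiE J D))"
proof -
  have fin: "finite (PiE J D)" using assms by (simp add: finite_PiE)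
  have pos: "real (card (PiE J D)) > 0"
    using assms by (simp add: card_gt_0_iff finite_PiE PiE_eq_empty_iff)
  have sub: "{p \<in> PiE J D. f j (p j) \<noteq> g j (p j)} \<subseteq> {p \<in> PiE J D. pmap J f p \<noteq> pmap J g p}"
  proof
    fix p assume "p \<in> {p \<in> PiE J D. f j (p j) \<noteq> g j (p j)}"
    then have p: "p \<in> PiE J D" "f j (p j) \<noteq> g j (p j)" by simp_all
    then have "pmap J f p j \<noteq> pmap J g p j" using assms(3) by (simp add: pmap_def)
    then show "p \<in> {p \<in> PiE J D. pmap J f p \<noteq> pmap J g p}" using p by auto
  qed
  have "ham_dist (D j) (f j) (g j) * real (card (PiE J D)) = real (card {p \<in> PiE J D. f j (p j) \<noteq> g j (p j)})"
    using ham_coord[OF assms(1,3)] assms(2)[OF assms(3)] by simp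
  also have "\<dots> \<le> real (card {p \<in> PiE J D. pmap J f p \<noteq> pmap J g p})"
    using card_mono[OF _ sub] fin by simp
  finally show ?thesis using pos by (simp add: le_divide_eq)
qed

lemma pmap_in:
  assumes "p \<in> PiE J D" "\<And>j. j \<in> J \<Longrightarrow> f j ` D j \<subseteq> D j"
  shows "pmap J f p \<in> PiE J D"
  using assms unfolding pmap_def by (auto simp: PiE_iff)

lemma pmap_comp: "pmap J f (pmap J g p) = pmap J (\<lambda>j. f j \<circ> g j) p"
  unfolding pmap_def by (auto simp: fun_eq_iff)

lemma pmap_id:
  assumes "p \<in> PiE J D" "\<And>j v. j \<in> J \<Longrightarrow> v \<in> D j \<Longrightarrow> f j v = v"
  shows "pmap J f p = p"
  using assms unfolding pmap_def by (auto simp: PiE_iff fun_eq_iff extensional_def)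

lemma pmap_cong: "(\<And>j. j \<in> J \<Longrightarrow> f j = g j) \<Longrightarrow> pmap J f = pmap J g"
  unfolding pmap_def by (auto simp: fun_eq_iff)

lemma pmap_fiber:
  assumes "finite J" "\<And>i. i \<in> J \<Longrightarrow> finite (D i)"
  shows "card {p \<in> PiE J D. pmap J f p = q} \<le> (\<Prod>j\<in>J. card {u \<in> D j. f j u = q j})"
proof -
  have "{p \<in> PiE J D. pmap J f p = q} \<subseteq> PiE J (\<lambda>j. {u \<in> D j. f j u = q j})"
    unfolding pmap_def by (auto simp: PiE_iff extensional_def)
  moreover have "finite (PiE J (\<lambda>j. {u \<in> D j. f j u = q j}))"
    using assms by (simp add: finite_PiE)
  ultimately have "card {p \<in> PiE J D. pmap J f p = q} \<le> card (PiE J (\<lambda>j. {u \<in> D j. f j u = q j}))"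
    by (rule card_mono[rotated])
  also have "\<dots> = (\<Prod>j\<in>J. card {u \<in> D j. f j u = q j})"
    using assms(1) by (rule card_PiE)
  finally show ?thesis .
qed

lemma tr_set:
  assumes "bij_betw e P N"
  shows "{n \<in> N. Q (inv_into P e n)} = e ` {p \<in> P. Q p}"
proof
  show "{n \<in> N. Q (inv_into P e n)} \<subseteq> e ` {p \<in> P. Q p}"
  proof
    fix n assume "n \<in> {n \<in> N. Q (inv_into P e n)}"
    then have n: "n \<in> N" "Q (inv_into P e n)" by auto
    have "inv_into P e n \<in> P" using n assms by (metis bij_betw_imp_surj_on inv_into_into)
    moreover have "e (inv_into P e n) = n" using n assms by (metis bij_betw_imp_surj_on f_inv_into_f)
    ultimately show "n \<in> e ` {p \<in> P. Q p}" using n by (intro image_eqI[of _ _ "inv_into P e n"]) simp_all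
  qed
next
  show "e ` {p \<in> P. Q p} \<subseteq> {n \<in> N. Q (inv_into P e n)}"
  proof
    fix n assume "n \<in> e ` {p \<in> P. Q p}"
    then obtain p where p: "p \<in> P" "Q p" "n = e p" by blast
    have "inj_on e P" using assms by (simp add: bij_betw_def)
    then have "inv_into P e n = p" using p by (simp add: inv_into_f_f)
    moreover have "n \<in> N" using p assms by (simp add: bij_betw_apply)
    ultimately show "n \<in> {n \<in> N. Q (inv_into P e n)}" using p by simp
  qed
qed

lemma ham_cong:
  assumes "\<And>v. v \<in> D \<Longrightarrow> f v = f' v" "\<And>v. v \<in> D \<Longrightarrow> g v = g' v"
  shows "ham_dist D f g = ham_dist D f' g'"
proof -
  have "{v \<in> D. f v \<noteq> g v} = {v \<in> D. f' v \<noteq> g' v}" using assms by auto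
  then show ?thesis unfolding ham_dist_def by simp
qed

lemma tr_ham:
  assumes "bij_betw e P N" "\<And>p. p \<in> P \<Longrightarrow> X p \<in> P" "\<And>p. p \<in> P \<Longrightarrow> Y p \<in> P"
  shows "ham_dist N (\<lambda>n. e (X (inv_into P e n))) (\<lambda>n. e (Y (inv_into P e n)))
       = real (card {p \<in> P. X p \<noteq> Y p}) / real (card P)"
proof -
  have inj: "inj_on e P" using assms(1) by (simp add: bij_betw_def)
  have T: "{n \<in> N. e (X (inv_into P e n)) \<noteq> e (Y (inv_into P e n))} = e ` {p \<in> P. e (X p) \<noteq> e (Y p)}"
    by (rule tr_set[OF assms(1)])
  have S: "{p \<in> P. e (X p) \<noteq> e (Y p)} = {p \<in> P. X p \<noteq> Y p}"
  proof (rule Collect_cong)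
    fix p show "(p \<in> P \<and> e (X p) \<noteq> e (Y p)) = (p \<in> P \<and> X p \<noteq> Y p)"
      using inj_on_eq_iff[OF inj assms(2)[of p] assms(3)[of p]] by blast
  qed
  have "card {n \<in> N. e (X (inv_into P e n)) \<noteq> e (Y (inv_into P e n))} = card (e ` {p \<in> P. X p \<noteq> Y p})"
    unfolding T S ..
  also have "\<dots> = card {p \<in> P. X p \<noteq> Y p}"
    by (rule card_image[OF inj_on_subset[OF inj]]) blast
  finally have "card {n \<in> N. e (X (inv_into P e n)) \<noteq> e (Y (inv_into P e n))} = card {p \<in> P. X p \<noteq> Y p}" .
  moreover have "card N = card P" using assms(1) by (simp add: bij_betw_same_card)
  ultimately show ?thesis unfolding ham_dist_def by simp
qed

lemma tr_fiber:
  assumes "bij_betw e P N" "\<And>p. p \<in> P \<Longrightarrow> X p \<in> P" "v \<in> N"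
  shows "card {u \<in> N. e (X (inv_into P e u)) = v} = card {p \<in> P. X p = inv_into P e v}"
proof -
  have inj: "inj_on e P" using assms(1) by (simp add: bij_betw_def)
  have v: "inv_into P e v \<in> P" "e (inv_into P e v) = v"
    using assms(1,3) by (simp_all add: bij_betw_def inv_into_into f_inv_into_f)
  have T: "{u \<in> N. e (X (inv_into P e u)) = v} = e ` {p \<in> P. e (X p) = v}"
    by (rule tr_set[OF assms(1)])
  have S: "{p \<in> P. e (X p) = v} = {p \<in> P. X p = inv_into P e v}"
  proof (rule Collect_cong)
    fix p show "(p \<in> P \<and> e (X p) = v) = (p \<in> P \<and> X p = inv_into P e v)"
      using inj_on_eq_iff[OF inj assms(2)[of p] v(1)] v(2) by metis
  qed
  have "card {u \<in> N. e (X (inv_into P e u)) = v} = card (e ` {p \<in> P. X p = inv_into P e v})"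
    unfolding T S ..
  also have "\<dots> = card {p \<in> P. X p = inv_into P e v}"
    by (rule card_image[OF inj_on_subset[OF inj]]) blast
  finally show ?thesis .
qed

definition good :: "('a, 'b) monoid_scheme \<Rightarrow> 'a set \<Rightarrow> nat \<Rightarrow> real \<Rightarrow> nat set \<Rightarrow> ('a \<Rightarrow> nat \<Rightarrow> nat) \<Rightarrow> bool" where
  "good M K \<Delta> \<epsilon> D \<sigma> \<longleftrightarrow>
              finite D \<and> D \<noteq> {} \<and>
              (\<forall>m \<in> carrier M. \<sigma> m ` D \<subseteq> D) \<and>
              (\<forall>v \<in> D. \<sigma> \<one>\<^bsub>M\<^esub> v = v) \<and>
              (\<forall>k1 \<in> K. \<forall>k2 \<in> K.
                  ham_dist D (\<sigma> (k1 \<otimes>\<^bsub>M\<^esub> k2)) (\<sigma> k1 \<circ> \<sigma> k2) \<le> \<epsilon>) \<and>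
              (\<forall>k1 \<in> K. \<forall>k2 \<in> K. k1 \<noteq> k2 \<longrightarrow>
                  ham_dist D (\<sigma> k1) (\<sigma> k2) \<ge> 1 - \<epsilon>) \<and>
              (\<forall>k \<in> K. \<forall>v \<in> D. card {u \<in> D. \<sigma> k u = v} \<le> \<Delta>)"

lemma ss_iff: "strongly_sofic M \<longleftrightarrow>
     (\<forall>K. K \<subseteq> carrier M \<and> finite K \<longrightarrow>
       (\<exists>\<Delta>::nat. \<Delta> \<ge> 1 \<and> (\<forall>\<epsilon>::real. \<epsilon> > 0 \<longrightarrow> (\<exists>D \<sigma>. good M K \<Delta> \<epsilon> D \<sigma>))))"
  unfolding strongly_sofic_def good_def by (rule refl)

theorem proposition3p8:
  fixes I :: "'i set" and M :: "'i \<Rightarrow> ('a, 'b) monoid_scheme"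
  assumes "\<And>i. i \<in> I \<Longrightarrow> monoid (M i)"
    and "\<And>i. i \<in> I \<Longrightarrow> strongly_sofic (M i)"
  shows "strongly_sofic (product_group I M)"
  unfolding ss_iff
proof (intro allI impI)
  fix K assume K: "K \<subseteq> carrier (product_group I M) \<and> finite K"
  have Kc: "\<And>k. k \<in> K \<Longrightarrow> k \<in> (\<Pi>\<^sub>E i\<in>I. carrier (M i))" using K by auto
  define prs where "prs = {(a, b). a \<in> K \<and> b \<in> K \<and> a \<noteq> b}"
  have finprs: "finite prs"
  proof (rule finite_subset)
    show "prs \<subseteq> K \<times> K" unfolding prs_def by auto
    show "finite (K \<times> K)" using K by simp
  qed
  define w where "w = (\<lambda>(a::'i \<Rightarrow> 'a, b::'i \<Rightarrow> 'a). SOME i. i \<in> I \<and> a i \<noteq> b i)"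
  have wsep: "w (a, b) \<in> I \<and> a (w (a, b)) \<noteq> b (w (a, b))" if ab: "a \<in> K" "b \<in> K" "a \<noteq> b" for a b
  proof -
    have "\<exists>i. i \<in> I \<and> a i \<noteq> b i"
    proof (rule ccontr)
      assume "\<not> (\<exists>i. i \<in> I \<and> a i \<noteq> b i)"
      then have "a = b" using Kc[OF ab(1)] Kc[OF ab(2)] by (intro PiE_ext) auto
      with ab(3) show False by simp
    qed
    from someI_ex[OF this] show ?thesis unfolding w_def by simp
  qed
  define J where "J = w ` prs"
  have finJ: "finite J" unfolding J_def using finprs by simp
  have JI: "J \<subseteq> I" unfolding J_def prs_def using wsep by auto
  have sepJ: "w (a, b) \<in> J" if "a \<in> K" "b \<in> K" "a \<noteq> b" for a b
    unfolding J_def prs_def using that by auto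
  define KK where "KK = (\<lambda>j. (\<lambda>k. k j) ` K)"
  have KKc: "KK j \<subseteq> carrier (M j) \<and> finite (KK j)" if "j \<in> I" for j
    unfolding KK_def using K Kc that by (auto simp: PiE_iff)
  have "\<forall>j\<in>J. \<exists>\<Delta>::nat. \<Delta> \<ge> 1 \<and> (\<forall>\<epsilon>::real. \<epsilon> > 0 \<longrightarrow> (\<exists>D \<sigma>. good (M j) (KK j) \<Delta> \<epsilon> D \<sigma>))"
  proof
    fix j assume "j \<in> J"
    then have "j \<in> I" using JI by auto
    then show "\<exists>\<Delta>::nat. \<Delta> \<ge> 1 \<and> (\<forall>\<epsilon>::real. \<epsilon> > 0 \<longrightarrow> (\<exists>D \<sigma>. good (M j) (KK j) \<Delta> \<epsilon> D \<sigma>))"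
      using assms(2)[of j] KKc[of j] unfolding ss_iff by blast
  qed
  then obtain \<Delta>f where \<Delta>f: "\<forall>j\<in>J. \<Delta>f j \<ge> (1::nat) \<and> (\<forall>\<epsilon>::real. \<epsilon> > 0 \<longrightarrow> (\<exists>D \<sigma>. good (M j) (KK j) (\<Delta>f j) \<epsilon> D \<sigma>))"
    by (metis (no_types, lifting) bchoice)
  show "\<exists>\<Delta>::nat. \<Delta> \<ge> 1 \<and> (\<forall>\<epsilon>::real. \<epsilon> > 0 \<longrightarrow> (\<exists>D \<sigma>. good (product_group I M) K \<Delta> \<epsilon> D \<sigma>))"
  proof (rule exI[of _ "prod \<Delta>f J"], intro conjI allI impI)
    show "1 \<le> prod \<Delta>f J" using \<Delta>f by (intro prod_ge_1) auto
    fix \<epsilon> :: real assume \<epsilon>: "\<epsilon> > 0"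
    define \<epsilon>' where "\<epsilon>' = \<epsilon> / (real (card J) + 1)"
    have \<epsilon>'pos: "\<epsilon>' > 0" unfolding \<epsilon>'_def using \<epsilon> by simp
    have \<epsilon>'le: "\<epsilon>' \<le> \<epsilon>" unfolding \<epsilon>'_def using \<epsilon> by (simp add: divide_le_eq)
    have s1: "real (card J) * \<epsilon>' \<le> (real (card J) + 1) * \<epsilon>'" using \<epsilon>'pos by (intro mult_right_mono) auto
    have s2: "(real (card J) + 1) * \<epsilon>' = \<epsilon>" unfolding \<epsilon>'_def by simp
    have sum\<epsilon>: "real (card J) * \<epsilon>' \<le> \<epsilon>" using s1 s2 by simp
    have "\<forall>j\<in>J. \<exists>x. good (M j) (KK j) (\<Delta>f j) \<epsilon>' (fst x) (snd x)"
    proof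
      fix j assume j: "j \<in> J"
      then obtain D \<sigma> where "good (M j) (KK j) (\<Delta>f j) \<epsilon>' D \<sigma>" using \<Delta>f \<epsilon>'pos by blast
      then show "\<exists>x. good (M j) (KK j) (\<Delta>f j) \<epsilon>' (fst x) (snd x)" by (intro exI[of _ "(D, \<sigma>)"]) simp
    qed
    then obtain g where g: "\<forall>j\<in>J. good (M j) (KK j) (\<Delta>f j) \<epsilon>' (fst (g j)) (snd (g j))"
      by (metis (no_types, lifting) bchoice)
    define Df where "Df = (\<lambda>j. fst (g j))"
    define \<sigma>f where "\<sigma>f = (\<lambda>j. snd (g j))"
    have G: "good (M j) (KK j) (\<Delta>f j) \<epsilon>' (Df j) (\<sigma>f j)" if "j \<in> J" for j
      using g that unfolding Df_def \<sigma>f_def by auto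
    have Dfin: "finite (Df j) \<and> Df j \<noteq> {}" if "j \<in> J" for j using G[OF that] unfolding good_def by auto
    have Dmap: "\<sigma>f j m ` Df j \<subseteq> Df j" if "j \<in> J" "m \<in> carrier (M j)" for j m
      using G[OF that(1)] that(2) unfolding good_def by auto
    have Done: "\<sigma>f j \<one>\<^bsub>M j\<^esub> v = v" if "j \<in> J" "v \<in> Df j" for j v
      using G[OF that(1)] that(2) unfolding good_def by auto
    have Dmult: "ham_dist (Df j) (\<sigma>f j (k1 \<otimes>\<^bsub>M j\<^esub> k2)) (\<sigma>f j k1 \<circ> \<sigma>f j k2) \<le> \<epsilon>'"
      if "j \<in> J" "k1 \<in> KK j" "k2 \<in> KK j" for j k1 k2
      using G[OF that(1)] that(2,3) unfolding good_def by auto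
    have Ddist: "ham_dist (Df j) (\<sigma>f j k1) (\<sigma>f j k2) \<ge> 1 - \<epsilon>'"
      if "j \<in> J" "k1 \<in> KK j" "k2 \<in> KK j" "k1 \<noteq> k2" for j k1 k2
      using G[OF that(1)] that(2-4) unfolding good_def by auto
    have Dfib: "card {u \<in> Df j. \<sigma>f j k u = v} \<le> \<Delta>f j"
      if "j \<in> J" "k \<in> KK j" "v \<in> Df j" for j k v
      using G[OF that(1)] that(2,3) unfolding good_def by auto
    define P where "P = PiE J Df"
    have finP: "finite P" unfolding P_def using finJ Dfin by (simp add: finite_PiE)
    have neP: "P \<noteq> {}" unfolding P_def using Dfin by (simp add: PiE_eq_empty_iff)
    obtain e where e: "bij_betw e P {0..<card P}" using ex_bij_betw_finite_nat[OF finP] by blast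
    define N where "N = {0..<card P}"
    define E where "E = inv_into P e"
    define X where "X = (\<lambda>m::'i \<Rightarrow> 'a. pmap J (\<lambda>j. \<sigma>f j (m j)))"
    define \<sigma> where "\<sigma> = (\<lambda>m n. e (X m (E n)))"
    have eN: "bij_betw e P N" using e unfolding N_def .
    have EP: "E n \<in> P" if "n \<in> N" for n
      using eN that unfolding E_def by (metis bij_betw_imp_surj_on inv_into_into)
    have eE: "e (E n) = n" if "n \<in> N" for n
      using eN that unfolding E_def by (metis bij_betw_imp_surj_on f_inv_into_f)
    have eP: "e p \<in> N" if "p \<in> P" for p using eN that by (auto simp: bij_betw_def)
    have Ee: "E (e p) = p" if "p \<in> P" for p
      using eN that unfolding E_def by (simp add: bij_betw_def inv_into_f_f)
    have Xin: "X m p \<in> P" if "m \<in> carrier (product_group I M)" "p \<in> P" for m p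
      unfolding X_def P_def
    proof (rule pmap_in)
      show "p \<in> PiE J Df" using that(2) unfolding P_def .
      fix j assume "j \<in> J"
      then have "m j \<in> carrier (M j)" using that(1) JI by (auto simp: PiE_iff)
      then show "\<sigma>f j (m j) ` Df j \<subseteq> Df j" using Dmap \<open>j \<in> J\<close> by blast
    qed
    have KPG: "k \<in> carrier (product_group I M)" if "k \<in> K" for k using K that by auto
    have kKK: "k j \<in> KK j" if "k \<in> K" for k j unfolding KK_def using that by auto
    have DfinJ: "\<And>i. i \<in> J \<Longrightarrow> finite (Df i) \<and> Df i \<noteq> {}" using Dfin by blast
    show "\<exists>D \<sigma>. good (product_group I M) K (prod \<Delta>f J) \<epsilon> D \<sigma>"
    proof (intro exI)
      show "good (product_group I M) K (prod \<Delta>f J) \<epsilon> N \<sigma>"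
        unfolding good_def
      proof (intro conjI ballI impI)
        show "finite N" unfolding N_def by simp
        show "N \<noteq> {}" unfolding N_def using finP neP by (simp add: card_gt_0_iff)
      next
        fix m assume "m \<in> carrier (product_group I M)"
        then show "\<sigma> m ` N \<subseteq> N" unfolding \<sigma>_def using EP Xin eP by auto
      next
        fix v assume v: "v \<in> N"
        have "X \<one>\<^bsub>product_group I M\<^esub> (E v) = E v"
          unfolding X_def
        proof (rule pmap_id)
          show "E v \<in> PiE J Df" using EP[OF v] unfolding P_def .
          fix j u assume "j \<in> J" "u \<in> Df j"
          then show "\<sigma>f j (\<one>\<^bsub>product_group I M\<^esub> j) u = u" using JI Done by auto
        qed
        then show "\<sigma> \<one>\<^bsub>product_group I M\<^esub> v = v" unfolding \<sigma>_def using eE[OF v] by simp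
      next
        fix k1 k2 assume k: "k1 \<in> K" "k2 \<in> K"
        define Y where "Y = pmap J (\<lambda>j. \<sigma>f j (k1 j) \<circ> \<sigma>f j (k2 j))"
        define Z where "Z = pmap J (\<lambda>j. \<sigma>f j (k1 j \<otimes>\<^bsub>M j\<^esub> k2 j))"
        have XZ: "X (k1 \<otimes>\<^bsub>product_group I M\<^esub> k2) = Z"
          unfolding X_def Z_def using JI by (intro pmap_cong) auto
        have YX: "Y p = X k1 (X k2 p)" for p unfolding Y_def X_def by (simp add: pmap_comp)
        have "ham_dist N (\<sigma> (k1 \<otimes>\<^bsub>product_group I M\<^esub> k2)) (\<sigma> k1 \<circ> \<sigma> k2)
            = ham_dist N (\<lambda>n. e (Z (E n))) (\<lambda>n. e (Y (E n)))"
        proof (rule ham_cong)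
          fix n assume "n \<in> N"
          show "\<sigma> (k1 \<otimes>\<^bsub>product_group I M\<^esub> k2) n = e (Z (E n))" unfolding \<sigma>_def XZ ..
          show "(\<sigma> k1 \<circ> \<sigma> k2) n = e (Y (E n))"
            unfolding \<sigma>_def YX using Ee Xin KPG k EP \<open>n \<in> N\<close> by simp
        qed
        also have "\<dots> = real (card {p \<in> P. Z p \<noteq> Y p}) / real (card P)"
          unfolding E_def
        proof (rule tr_ham[OF eN])
          fix p assume p: "p \<in> P"
          show "Y p \<in> P" unfolding YX using Xin KPG k p by simp
          have "k1 \<otimes>\<^bsub>product_group I M\<^esub> k2 \<in> carrier (product_group I M)"
          proof -
            have "(\<lambda>i\<in>I. k1 i \<otimes>\<^bsub>M i\<^esub> k2 i) \<in> (\<Pi>\<^sub>E i\<in>I. carrier (M i))"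
            proof (rule restrict_PiE_iff[THEN iffD2], rule ballI)
              fix i assume i: "i \<in> I"
              have "k1 i \<in> carrier (M i)" "k2 i \<in> carrier (M i)" using Kc k i by (auto intro: PiE_mem)
              then show "k1 i \<otimes>\<^bsub>M i\<^esub> k2 i \<in> carrier (M i)" using monoid.m_closed[OF assms(1)[OF i]] by blast
            qed
            then show ?thesis by simp
          qed
          then show "Z p \<in> P" using Xin p XZ by metis
        qed
        also have "\<dots> \<le> (\<Sum>j\<in>J. ham_dist (Df j) (\<sigma>f j (k1 j \<otimes>\<^bsub>M j\<^esub> k2 j)) (\<sigma>f j (k1 j) \<circ> \<sigma>f j (k2 j)))"
          unfolding Z_def Y_def P_def by (rule ham_pmap_le[OF finJ DfinJ])
        also have "\<dots> \<le> (\<Sum>j\<in>J. \<epsilon>')"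
        proof (rule sum_mono)
          fix j assume "j \<in> J"
          then show "ham_dist (Df j) (\<sigma>f j (k1 j \<otimes>\<^bsub>M j\<^esub> k2 j)) (\<sigma>f j (k1 j) \<circ> \<sigma>f j (k2 j)) \<le> \<epsilon>'"
            using Dmult[OF _ kKK[OF k(1)] kKK[OF k(2)]] by blast
        qed
        also have "\<dots> \<le> \<epsilon>" using sum\<epsilon> by simp
        finally show "ham_dist N (\<sigma> (k1 \<otimes>\<^bsub>product_group I M\<^esub> k2)) (\<sigma> k1 \<circ> \<sigma> k2) \<le> \<epsilon>" .
      next
        fix k1 k2 assume k: "k1 \<in> K" "k2 \<in> K" and ne: "k1 \<noteq> k2"
        define j0 where "j0 = w (k1, k2)"
        have j0: "j0 \<in> J" "k1 j0 \<noteq> k2 j0" unfolding j0_def using sepJ wsep k ne by auto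
        have "1 - \<epsilon> \<le> 1 - \<epsilon>'" using \<epsilon>'le by simp
        also have "\<dots> \<le> ham_dist (Df j0) (\<sigma>f j0 (k1 j0)) (\<sigma>f j0 (k2 j0))"
          using Ddist[OF j0(1) kKK[OF k(1)] kKK[OF k(2)] j0(2)] .
        also have "\<dots> \<le> real (card {p \<in> P. X k1 p \<noteq> X k2 p}) / real (card P)"
          unfolding X_def P_def by (rule ham_pmap_ge[OF finJ DfinJ j0(1)])
        also have "\<dots> = ham_dist N (\<sigma> k1) (\<sigma> k2)"
          unfolding \<sigma>_def E_def
          by (rule tr_ham[OF eN, symmetric]) (use Xin KPG k in auto)
        finally show "1 - \<epsilon> \<le> ham_dist N (\<sigma> k1) (\<sigma> k2)" .
      next
        fix k v assume k: "k \<in> K" and v: "v \<in> N"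
        have "card {u \<in> N. \<sigma> k u = v} = card {p \<in> P. X k p = E v}"
          unfolding \<sigma>_def E_def by (rule tr_fiber[OF eN _ v]) (use Xin KPG k in auto)
        also have "\<dots> \<le> (\<Prod>j\<in>J. card {u \<in> Df j. \<sigma>f j (k j) u = E v j})"
          unfolding X_def P_def using finJ Dfin by (intro pmap_fiber) auto
        also have "\<dots> \<le> prod \<Delta>f J"
        proof (rule prod_mono)
          fix j assume j: "j \<in> J"
          have "E v j \<in> Df j" using EP[OF v] j unfolding P_def by (auto simp: PiE_iff)
          then show "0 \<le> card {u \<in> Df j. \<sigma>f j (k j) u = E v j} \<and> card {u \<in> Df j. \<sigma>f j (k j) u = E v j} \<le> \<Delta>f j"
            using Dfib[OF j kKK[OF k]] by simp
        qed
        finally show "card {u \<in> N. \<sigma> k u = v} \<le> prod \<Delta>f J" .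
      qed
    qed
  qed
qed

end
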